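(* Let $n\ge 1$, $i\in\{1,\ldots,n-1\}$, and let $C$ be an almost-$s_i$-stable set of transpositions in $S_n$: $s_i\in C$ and there is a unique transposition $\tau$ with $\tau\in C$ but $s_i\tau s_i\notin C$. Put $C_-=C\setminus\{\tau\}$ and $C_+=C\cup\{s_i\tau s_i\}$ (which are $s_i$-stable). For a set $D$ of transpositions write $H_D^{*s_i}=\{f\in H_D\mid f*s_i=f\}$. If $\tau=(i\leftrightarrow k)$, then $$H_C=H_{C_+}^{*s_i}\oplus (x_i-x_k)H_{C_-}^{*s_i}$$ as an internal direct sum of $\mathbb{C}[t_1,\ldots,t_n]$-submodules of $H$ equipped with the dot action. Otherwise $\tau=(i+1\leftrightarrow k)$, and $$H_C=H_{C_+}^{*s_i}\oplus (x_k-x_{i+1})H_{C_-}^{*s_i}$$ as an internal direct sum of $\mathbb{C}[t_1,\ldots,t_n]$-submodules of $H$ equipped with the dot action.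
   Context: Let $S_n$ be the symmetric group on $\{1,\ldots,n\}$ with $(vw)(j)=v(w(j))$, and $s_i=(i\leftrightarrow i+1)$. Let $H=\mathrm{Fun}(S_n,\mathbb{C}[t_1,\ldots,t_n])$ with pointwise operations; it is a $\mathbb{C}[t_1,\ldots,t_n]$-module via constant functions. The star action (right) is $(f*w)(v;t_1,\ldots,t_n)=f(vw^{-1};t_1,\ldots,t_n)$, and the dot action (left) is $(w\cdot f)(v;t_1,\ldots,t_n)=f(w^{-1}v;t_{w(1)},\ldots,t_{w(n)})$. Let $x_j\in H$ be the function $v\mapsto t_{v(j)}$. For a transposition $\sigma=(a\leftrightarrow b)$, $f\in H$ satisfies condition $\sigma$ if $f-f*\sigma=(x_a-x_b)g$ for some $g\in H$; these form a subring $H_\sigma$, and for a set $D$ of transpositions $H_D=\bigcap_{\sigma\in D}H_\sigma$ (with $H_\varnothing=H$). A set $D$ of transpositions is $s_i$-stable if $s_i\in D$ and $s_iDs_i=D$. *)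

theory Defs
  imports "HOL-Library.Poly_Mapping" "HOL-Combinatorics.Transposition" "HOL-Combinatorics.Permutations" Complex_Main
begin

type_synonym cpoly = "(nat \<Rightarrow>\<^sub>0 nat) \<Rightarrow>\<^sub>0 complex"

definition tvar :: "nat \<Rightarrow> cpoly" where
  "tvar j = Poly_Mapping.single (Poly_Mapping.single j 1) 1"

definition Pn :: "nat \<Rightarrow> cpoly set" where
  "Pn n = {p. \<forall>m \<in> Poly_Mapping.keys p. Poly_Mapping.keys m \<subseteq> {1..n}}"

definition subst_vars :: "(nat \<Rightarrow> nat) \<Rightarrow> cpoly \<Rightarrow> cpoly" where
  "subst_vars w p = (\<Sum>m \<in> Poly_Mapping.keys p.
      Poly_Mapping.single (\<Sum>j \<in> Poly_Mapping.keys m. Poly_Mapping.single (w j) (Poly_Mapping.lookup m j)) (Poly_Mapping.lookup p m))"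

text \<open>S_n is the set of permutations of {1..n}; elements of H = Fun(S_n, C[t_1..t_n]) are
 represented as functions on all maps nat => nat that vanish outside S_n.\<close>
definition Hs :: "nat \<Rightarrow> ((nat \<Rightarrow> nat) \<Rightarrow> cpoly) set" where
  "Hs n = {f. (\<forall>v. v permutes {1..n} \<longrightarrow> f v \<in> Pn n) \<and> (\<forall>v. \<not> v permutes {1..n} \<longrightarrow> f v = 0)}"

definition xfun :: "nat \<Rightarrow> nat \<Rightarrow> (nat \<Rightarrow> nat) \<Rightarrow> cpoly" where
  "xfun n j = (\<lambda>v. if v permutes {1..n} then tvar (v j) else 0)"

definition star :: "((nat \<Rightarrow> nat) \<Rightarrow> cpoly) \<Rightarrow> (nat \<Rightarrow> nat) \<Rightarrow> ((nat \<Rightarrow> nat) \<Rightarrow> cpoly)" where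
  "star f w = (\<lambda>v. f (v \<circ> inv w))"

definition dot :: "(nat \<Rightarrow> nat) \<Rightarrow> ((nat \<Rightarrow> nat) \<Rightarrow> cpoly) \<Rightarrow> ((nat \<Rightarrow> nat) \<Rightarrow> cpoly)" where
  "dot w f = (\<lambda>v. subst_vars w (f (inv w \<circ> v)))"

definition sref :: "nat \<Rightarrow> nat \<Rightarrow> nat" where
  "sref i = transpose i (Suc i)"

definition transps :: "nat \<Rightarrow> (nat \<Rightarrow> nat) set" where
  "transps n = {transpose a b | a b. a \<in> {1..n} \<and> b \<in> {1..n} \<and> a \<noteq> b}"

definition satisfies :: "nat \<Rightarrow> (nat \<Rightarrow> nat) \<Rightarrow> ((nat \<Rightarrow> nat) \<Rightarrow> cpoly) \<Rightarrow> bool" where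
  "satisfies n \<sigma> f = (\<exists>a b. a \<noteq> b \<and> \<sigma> = transpose a b \<and>
      (\<exists>g \<in> Hs n. \<forall>v. f v - star f \<sigma> v = (xfun n a v - xfun n b v) * g v))"

definition HD :: "nat \<Rightarrow> (nat \<Rightarrow> nat) set \<Rightarrow> ((nat \<Rightarrow> nat) \<Rightarrow> cpoly) set" where
  "HD n D = {f \<in> Hs n. \<forall>\<sigma> \<in> D. satisfies n \<sigma> f}"

definition HDinv :: "nat \<Rightarrow> nat \<Rightarrow> (nat \<Rightarrow> nat) set \<Rightarrow> ((nat \<Rightarrow> nat) \<Rightarrow> cpoly) set" where
  "HDinv n i D = {f \<in> HD n D. star f (sref i) = f}"

definition dot_submodule :: "nat \<Rightarrow> ((nat \<Rightarrow> nat) \<Rightarrow> cpoly) set \<Rightarrow> bool" where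
  "dot_submodule n A = (A \<subseteq> Hs n \<and> (\<lambda>v. 0) \<in> A \<and>
     (\<forall>f \<in> A. \<forall>g \<in> A. (\<lambda>v. f v + g v) \<in> A) \<and>
     (\<forall>p \<in> Pn n. \<forall>f \<in> A. (\<lambda>v. p * f v) \<in> A) \<and>
     (\<forall>w. w permutes {1..n} \<longrightarrow> (\<forall>f \<in> A. dot w f \<in> A)))"

definition is_direct_sum :: "nat \<Rightarrow> ((nat \<Rightarrow> nat) \<Rightarrow> cpoly) set \<Rightarrow> ((nat \<Rightarrow> nat) \<Rightarrow> cpoly) set
    \<Rightarrow> ((nat \<Rightarrow> nat) \<Rightarrow> cpoly) set \<Rightarrow> bool" where
  "is_direct_sum n M A B = (dot_submodule n A \<and> dot_submodule n B \<and>
     M = {(\<lambda>v. a v + b v) | a b. a \<in> A \<and> b \<in> B} \<and> A \<inter> B = {(\<lambda>v. 0)})"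

definition mult_set :: "((nat \<Rightarrow> nat) \<Rightarrow> cpoly) \<Rightarrow> ((nat \<Rightarrow> nat) \<Rightarrow> cpoly) set \<Rightarrow> ((nat \<Rightarrow> nat) \<Rightarrow> cpoly) set" where
  "mult_set y S = {(\<lambda>v. y v * g v) | g. g \<in> S}"

end

theory Submission
  imports Defs
begin


definition cst :: "complex \<Rightarrow> cpoly" where "cst c = Poly_Mapping.single 0 c"

definition lin :: "((nat \<Rightarrow>\<^sub>0 nat) \<Rightarrow> cpoly) \<Rightarrow> cpoly \<Rightarrow> cpoly" where
  "lin F p = (\<Sum>m\<in>Poly_Mapping.keys p. cst (Poly_Mapping.lookup p m) * F m)"

lemma cst_0[simp]: "cst 0 = 0" by (simp add: cst_def)
lemma cst_1[simp]: "cst 1 = 1" by (simp add: cst_def)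
lemma cst_add: "cst (a + b) = cst a + cst b" by (simp add: cst_def single_add)
lemma cst_mult: "cst (a * b) = cst a * cst b" by (simp add: cst_def mult_single)

lemma lin_superset:
  assumes "finite S" "Poly_Mapping.keys p \<subseteq> S"
  shows "lin F p = (\<Sum>m\<in>S. cst (Poly_Mapping.lookup p m) * F m)"
  unfolding lin_def
  by (rule sum.mono_neutral_left) (use assms in \<open>auto simp: in_keys_iff\<close>)

lemma lin_add: "lin F (p + q) = lin F p + lin F q"
proof -
  let ?S = "Poly_Mapping.keys p \<union> Poly_Mapping.keys q"
  have "lin F (p + q) = (\<Sum>m\<in>?S. cst (Poly_Mapping.lookup (p+q) m) * F m)"
    by (rule lin_superset) (auto dest: keys_add[THEN subsetD])
  also have "\<dots> = (\<Sum>m\<in>?S. cst (Poly_Mapping.lookup p m) * F m) + (\<Sum>m\<in>?S. cst (Poly_Mapping.lookup q m) * F m)"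
    by (simp add: lookup_add cst_add distrib_right sum.distrib)
  also have "\<dots> = lin F p + lin F q"
    using lin_superset[of ?S p F] lin_superset[of ?S q F] by simp
  finally show ?thesis .
qed

lemma lin_zero[simp]: "lin F 0 = 0" by (simp add: lin_def)

lemma lin_minus: "lin F (- p) = - lin F p"
  using lin_add[of F "-p" p] by (simp add: eq_neg_iff_add_eq_0)

lemma lin_diff: "lin F (p - q) = lin F p - lin F q"
  using lin_add[of F p "-q"] lin_minus[of F q] by simp

lemma lin_single: "lin F (Poly_Mapping.single m c) = cst c * F m"
  by (cases "c = 0") (auto simp: lin_def)

lemma lin_sum: "lin F (sum f A) = (\<Sum>a\<in>A. lin F (f a))"
  by (induction A rule: infinite_finite_induct) (auto simp: lin_add)

lemma pm_expand: "(p :: 'a \<Rightarrow>\<^sub>0 'b::comm_monoid_add) = (\<Sum>m\<in>Poly_Mapping.keys p. Poly_Mapping.single m (Poly_Mapping.lookup p m))"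
proof (rule poly_mapping_eqI)
  fix k
  show "Poly_Mapping.lookup p k = Poly_Mapping.lookup (\<Sum>m\<in>Poly_Mapping.keys p. Poly_Mapping.single m (Poly_Mapping.lookup p m)) k"
    by (cases "k \<in> Poly_Mapping.keys p")
       (auto simp: lookup_sum lookup_single when_def in_keys_iff)
qed

lemma lin_mult:
  assumes "\<And>m m'. F (m + m') = F m * F m'"
  shows "lin F (p * q) = lin F p * lin F q"
proof -
  have "p * q = (\<Sum>m\<in>Poly_Mapping.keys p. Poly_Mapping.single m (Poly_Mapping.lookup p m)) *
                (\<Sum>m'\<in>Poly_Mapping.keys q. Poly_Mapping.single m' (Poly_Mapping.lookup q m'))"
    using pm_expand[of p] pm_expand[of q] by simp
  also have "\<dots> = (\<Sum>m\<in>Poly_Mapping.keys p. \<Sum>m'\<in>Poly_Mapping.keys q.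
       Poly_Mapping.single (m + m') (Poly_Mapping.lookup p m * Poly_Mapping.lookup q m'))"
    by (simp add: sum_product mult_single)
  finally have "lin F (p * q) = (\<Sum>m\<in>Poly_Mapping.keys p. \<Sum>m'\<in>Poly_Mapping.keys q.
       (cst (Poly_Mapping.lookup p m) * F m) * (cst (Poly_Mapping.lookup q m') * F m'))"
    by (simp add: lin_sum lin_single cst_mult assms mult_ac)
  also have "\<dots> = lin F p * lin F q"
    by (simp add: lin_def sum_product)
  finally show ?thesis .
qed

lemma lin_one: "F 0 = 1 \<Longrightarrow> lin F 1 = 1"
  using lin_single[of F 0 1] by simp

lemma lin_fun_diff: "lin F p - lin G p = lin (\<lambda>m. F m - G m) p"
  by (simp add: lin_def sum_subtractf right_diff_distrib)

lemma lin_dvd: "(\<And>m. d dvd F m) \<Longrightarrow> d dvd lin F p"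
  unfolding lin_def by (intro dvd_sum dvd_mult) auto

definition mon :: "(nat \<Rightarrow> cpoly) \<Rightarrow> (nat \<Rightarrow>\<^sub>0 nat) \<Rightarrow> cpoly" where
  "mon \<sigma> m = (\<Prod>j\<in>Poly_Mapping.keys m. \<sigma> j ^ Poly_Mapping.lookup m j)"

lemma mon_superset:
  assumes "finite K" "Poly_Mapping.keys m \<subseteq> K"
  shows "mon \<sigma> m = (\<Prod>j\<in>K. \<sigma> j ^ Poly_Mapping.lookup m j)"
  unfolding mon_def
  by (rule prod.mono_neutral_left) (use assms in \<open>auto simp: in_keys_iff\<close>)

lemma mon_add: "mon \<sigma> (m + m') = mon \<sigma> m * mon \<sigma> m'"
proof -
  let ?K = "Poly_Mapping.keys m \<union> Poly_Mapping.keys m'"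
  have "mon \<sigma> (m + m') = (\<Prod>j\<in>?K. \<sigma> j ^ Poly_Mapping.lookup (m + m') j)"
    by (rule mon_superset) (auto dest: keys_add[THEN subsetD])
  also have "\<dots> = (\<Prod>j\<in>?K. \<sigma> j ^ Poly_Mapping.lookup m j) * (\<Prod>j\<in>?K. \<sigma> j ^ Poly_Mapping.lookup m' j)"
    by (simp add: lookup_add power_add prod.distrib)
  also have "\<dots> = mon \<sigma> m * mon \<sigma> m'"
    using mon_superset[of ?K m \<sigma>] mon_superset[of ?K m' \<sigma>] by simp
  finally show ?thesis .
qed

lemma mon_zero[simp]: "mon \<sigma> 0 = 1" by (simp add: mon_def)

definition ev :: "(nat \<Rightarrow> cpoly) \<Rightarrow> cpoly \<Rightarrow> cpoly" where "ev \<sigma> = lin (mon \<sigma>)"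

lemma ev_add: "ev \<sigma> (p + q) = ev \<sigma> p + ev \<sigma> q" by (simp add: ev_def lin_add)
lemma ev_diff: "ev \<sigma> (p - q) = ev \<sigma> p - ev \<sigma> q" by (simp add: ev_def lin_diff)
lemma ev_minus: "ev \<sigma> (- p) = - ev \<sigma> p" by (simp add: ev_def lin_minus)
lemma ev_mult: "ev \<sigma> (p * q) = ev \<sigma> p * ev \<sigma> q" by (simp add: ev_def lin_mult mon_add)
lemma ev_one: "ev \<sigma> 1 = 1" by (simp add: ev_def lin_one)
lemma ev_zero[simp]: "ev \<sigma> 0 = 0" by (simp add: ev_def)
lemma ev_tvar: "ev \<sigma> (tvar j) = \<sigma> j"
  by (simp add: ev_def tvar_def lin_single mon_def)

lemma tvar_power: "tvar j ^ e = Poly_Mapping.single (Poly_Mapping.single j e) 1"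
proof (induction e)
  case 0 then show ?case by simp
next
  case (Suc e) then show ?case
    by (simp add: tvar_def mult_single single_add[symmetric])
qed

lemma prod_single1: "(\<Prod>j\<in>K. Poly_Mapping.single (h j) (1::complex)) = Poly_Mapping.single (\<Sum>j\<in>K. h j) 1"
  by (induction K rule: infinite_finite_induct) (auto simp: mult_single)

lemma mon_tvar_comp: "mon (\<lambda>j. tvar (w j)) m =
   Poly_Mapping.single (\<Sum>j\<in>Poly_Mapping.keys m. Poly_Mapping.single (w j) (Poly_Mapping.lookup m j)) 1"
  by (simp add: mon_def tvar_power prod_single1)

lemma mon_tvar: "mon tvar m = Poly_Mapping.single m 1"
  using mon_tvar_comp[of "\<lambda>j. j" m] pm_expand[of m] by simp

lemma cst_single1: "cst c * Poly_Mapping.single m 1 = Poly_Mapping.single m c"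
  by (simp add: cst_def mult_single)

lemma ev_tvar_id: "ev tvar p = p"
  unfolding ev_def lin_def mon_tvar cst_single1 using pm_expand[of p] by simp

lemma subst_vars_ev: "subst_vars w p = ev (\<lambda>j. tvar (w j)) p"
  unfolding ev_def lin_def mon_tvar_comp cst_single1 subst_vars_def by simp

lemma dvd_power_diff: "(d::'a::comm_ring_1) dvd a - b \<Longrightarrow> d dvd a ^ e - b ^ e"
proof (induction e)
  case (Suc e)
  have "a ^ Suc e - b ^ Suc e = a * (a ^ e - b ^ e) + (a - b) * b ^ e"
    by (simp add: algebra_simps)
  then show ?case using Suc by simp
qed simp

lemma dvd_prod_diff:
  assumes "\<And>j. j \<in> K \<Longrightarrow> (d::'a::comm_ring_1) dvd f j - g j"
  shows "d dvd prod f K - prod g K"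
  using assms
proof (induction K rule: infinite_finite_induct)
  case (insert x F)
  have "prod f (insert x F) - prod g (insert x F) = f x * (prod f F - prod g F) + (f x - g x) * prod g F"
    using insert by (simp add: algebra_simps)
  then show ?case using insert by simp
qed auto

lemma ev_diff_dvd:
  assumes "\<And>j. d dvd tvar j - \<sigma> j"
  shows "d dvd p - ev \<sigma> p"
proof -
  have "p - ev \<sigma> p = lin (\<lambda>m. mon tvar m - mon \<sigma> m) p"
    using ev_tvar_id[of p] by (metis ev_def lin_fun_diff)
  also have "d dvd \<dots>"
    by (rule lin_dvd) (unfold mon_def, intro dvd_prod_diff dvd_power_diff assms)
  finally show ?thesis .
qed



lemma tvar_eq_iff[simp]: "tvar a = tvar b \<longleftrightarrow> a = b"
proof
  assume "tvar a = tvar b"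
  then have "Poly_Mapping.lookup (tvar a) (Poly_Mapping.single a 1) = Poly_Mapping.lookup (tvar b) (Poly_Mapping.single a 1)" by simp
  then have "Poly_Mapping.single b (1::nat) = Poly_Mapping.single a 1"
    unfolding tvar_def by (auto simp: lookup_single when_def split: if_splits)
  then have "Poly_Mapping.lookup (Poly_Mapping.single b (1::nat)) a = Poly_Mapping.lookup (Poly_Mapping.single a 1) a" by simp
  then show "a = b" by (auto simp: lookup_single when_def split: if_splits)
qed simp

lemma tvar_diff_eq0: "tvar a - tvar b = 0 \<longleftrightarrow> a = b"
  by simp

definition phi :: "nat \<Rightarrow> nat \<Rightarrow> cpoly \<Rightarrow> cpoly" where
  "phi a b = ev (\<lambda>j. if j = a then tvar b else tvar j)"

lemma phi_tvar: "phi a b (tvar j) = tvar (if j = a then b else j)"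
  by (simp add: phi_def ev_tvar)

lemma phi_kernel: "phi a b p = 0 \<longleftrightarrow> (tvar a - tvar b) dvd p"
proof
  assume "phi a b p = 0"
  moreover have "(tvar a - tvar b) dvd p - phi a b p"
    unfolding phi_def by (rule ev_diff_dvd) auto
  ultimately show "(tvar a - tvar b) dvd p" by simp
next
  assume "(tvar a - tvar b) dvd p"
  then obtain r where "p = (tvar a - tvar b) * r" by blast
  have m: "phi a b ((tvar a - tvar b) * r) = (phi a b (tvar a) - phi a b (tvar b)) * phi a b r"
    unfolding phi_def by (simp add: ev_mult ev_diff)
  show "phi a b p = 0" unfolding \<open>p = _\<close> m by (simp add: phi_tvar)
qed

lemma phi_mult: "phi a b (x * y) = phi a b x * phi a b y"
  by (simp add: phi_def ev_mult)

lemma phi_diff: "phi a b (x - y) = phi a b x - phi a b y"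
  by (simp add: phi_def ev_diff)

lemma dvd_cancel_phi:
  assumes "(tvar a - tvar b) dvd (x * y)" "phi a b x \<noteq> 0"
  shows "(tvar a - tvar b) dvd y"
  using assms by (simp add: phi_kernel[symmetric] phi_mult)

lemma phi_tvar_diff_nz:
  assumes "c \<noteq> e" "\<not> (c = a \<and> e = b)" "\<not> (c = b \<and> e = a)"
  shows "phi a b (tvar c - tvar e) \<noteq> 0"
  using assms by (auto simp: phi_diff phi_tvar)

lemma Pn_zero[simp]: "0 \<in> Pn n" by (simp add: Pn_def)
lemma PnD: "p \<in> Pn n \<Longrightarrow> m \<in> Poly_Mapping.keys p \<Longrightarrow> Poly_Mapping.keys m \<subseteq> {1..n}"
  by (simp add: Pn_def)
lemma PnI: "(\<And>m. m \<in> Poly_Mapping.keys p \<Longrightarrow> Poly_Mapping.keys m \<subseteq> {1..n}) \<Longrightarrow> p \<in> Pn n"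
  by (simp add: Pn_def)
lemma Pn_sub: assumes "\<And>m. m \<in> Poly_Mapping.keys r \<Longrightarrow> m \<in> Poly_Mapping.keys p \<or> m \<in> Poly_Mapping.keys q" "p \<in> Pn n" "q \<in> Pn n" shows "r \<in> Pn n"
proof (rule PnI)
  fix m assume "m \<in> Poly_Mapping.keys r"
  then consider "m \<in> Poly_Mapping.keys p" | "m \<in> Poly_Mapping.keys q" using assms(1) by blast
  then show "Poly_Mapping.keys m \<subseteq> {1..n}"
    by cases (use PnD assms(2,3) in blast)+
qed
lemma Pn_add: "p \<in> Pn n \<Longrightarrow> q \<in> Pn n \<Longrightarrow> p + q \<in> Pn n"
  by (rule Pn_sub[of "p+q" p q]) (use keys_add[of p q] in blast)
lemma Pn_diff: "p \<in> Pn n \<Longrightarrow> q \<in> Pn n \<Longrightarrow> p - q \<in> Pn n"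
  by (rule Pn_sub[of "p-q" p q]) (use keys_diff[of p q] in blast)
lemma Pn_mult: assumes "p \<in> Pn n" "q \<in> Pn n" shows "p * q \<in> Pn n"
proof (rule PnI)
  fix m assume "m \<in> Poly_Mapping.keys (p * q)"
  then obtain a b where ab: "m = a + b" "a \<in> Poly_Mapping.keys p" "b \<in> Poly_Mapping.keys q"
    using keys_mult[of p q] by blast
  then have "Poly_Mapping.keys a \<subseteq> {1..n}" "Poly_Mapping.keys b \<subseteq> {1..n}"
    using assms PnD by blast+
  then show "Poly_Mapping.keys m \<subseteq> {1..n}" using keys_add[of a b] ab(1) by blast
qed
lemma Pn_sum: "(\<And>a. a \<in> A \<Longrightarrow> f a \<in> Pn n) \<Longrightarrow> sum f A \<in> Pn n"
  by (induction A rule: infinite_finite_induct) (auto intro: Pn_add)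
lemma Pn_single: "Poly_Mapping.keys m \<subseteq> {1..n} \<Longrightarrow> Poly_Mapping.single m c \<in> Pn n"
  by (simp add: Pn_def)
lemma Pn_tvar: "j \<in> {1..n} \<Longrightarrow> tvar j \<in> Pn n"
  by (simp add: tvar_def Pn_single)

definition piP :: "nat \<Rightarrow> cpoly \<Rightarrow> cpoly" where
  "piP n = ev (\<lambda>j. if j \<in> {1..n} then tvar j else 0)"

lemma mon_piP: "mon (\<lambda>j. if j \<in> {1..n} then tvar j else 0) m =
   (if Poly_Mapping.keys m \<subseteq> {1..n} then Poly_Mapping.single m 1 else 0)"
proof (cases "Poly_Mapping.keys m \<subseteq> {1..n}")
  case True
  then have "mon (\<lambda>j. if j \<in> {1..n} then tvar j else 0) m = mon tvar m"
    unfolding mon_def by (intro prod.cong) auto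
  then show ?thesis using True by (simp add: mon_tvar)
next
  case False
  then obtain j where j: "j \<in> Poly_Mapping.keys m" "j \<notin> {1..n}" by blast
  then have z: "(\<lambda>j. (if j \<in> {1..n} then tvar j else 0) ^ Poly_Mapping.lookup m j) j = 0"
    using j by (subst if_not_P) (auto simp: in_keys_iff)
  have "\<exists>a\<in>Poly_Mapping.keys m. (\<lambda>j. (if j \<in> {1..n} then tvar j else 0) ^ Poly_Mapping.lookup m j) a = 0"
    using z j(1) by blast
  then have "mon (\<lambda>j. if j \<in> {1..n} then tvar j else 0) m = 0"
    unfolding mon_def by (rule prod_zero[OF finite_keys])
  then show ?thesis using False by simp
qed

lemma piP_Pn: "piP n p \<in> Pn n"
  unfolding piP_def ev_def lin_def mon_piP
  by (intro Pn_sum) (auto simp: cst_single1 intro!: Pn_single)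

lemma piP_fix:
  assumes "p \<in> Pn n" shows "piP n p = p"
proof -
  have "piP n p = (\<Sum>m\<in>Poly_Mapping.keys p. Poly_Mapping.single m (Poly_Mapping.lookup p m))"
    unfolding piP_def ev_def lin_def mon_piP
    by (rule sum.cong) (use assms in \<open>auto simp: cst_single1 Pn_def\<close>)
  then show ?thesis using pm_expand[of p] by simp
qed

lemma piP_mult: "piP n (x * y) = piP n x * piP n y"
  by (simp add: piP_def ev_mult)

lemma dvd_Pn:
  assumes "d \<in> Pn n" "p \<in> Pn n" "d dvd p"
  shows "\<exists>r\<in>Pn n. p = d * r"
proof -
  obtain r where "p = d * r" using assms by blast
  then have "piP n p = piP n d * piP n r" using piP_mult[of n d r] by simp
  then have "p = d * piP n r" using piP_fix assms(1,2) by simp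
  then show ?thesis using piP_Pn by blast
qed

lemma subst_vars_Pn:
  assumes w: "\<And>j. j \<in> {1..n} \<Longrightarrow> w j \<in> {1..n}" and p: "p \<in> Pn n"
  shows "subst_vars w p \<in> Pn n"
  unfolding subst_vars_def
proof (intro Pn_sum Pn_single subsetI)
  fix m x assume m: "m \<in> Poly_Mapping.keys p"
  let ?F = "\<lambda>j. Poly_Mapping.single (w j) (Poly_Mapping.lookup m j)"
  assume "x \<in> Poly_Mapping.keys (sum ?F (Poly_Mapping.keys m))"
  then have "x \<in> (\<Union>j\<in>Poly_Mapping.keys m. Poly_Mapping.keys (?F j))"
    using keys_sum[of ?F "Poly_Mapping.keys m"] by (rule subsetD[rotated])
  then obtain j where j: "j \<in> Poly_Mapping.keys m" "x \<in> Poly_Mapping.keys (?F j)" by (rule UN_E)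
  then have "x = w j" by (simp split: if_splits)
  moreover have "j \<in> {1..n}" using PnD[OF p m] j(1) by (rule subsetD)
  ultimately show "x \<in> {1..n}" using w by simp
qed

lemma subst_vars_mult: "subst_vars w (x * y) = subst_vars w x * subst_vars w y"
  by (simp add: subst_vars_ev ev_mult)
lemma subst_vars_diff: "subst_vars w (x - y) = subst_vars w x - subst_vars w y"
  by (simp add: subst_vars_ev ev_diff)
lemma subst_vars_add: "subst_vars w (x + y) = subst_vars w x + subst_vars w y"
  by (simp add: subst_vars_ev ev_add)
lemma subst_vars_tvar: "subst_vars w (tvar j) = tvar (w j)"
  by (simp add: subst_vars_ev ev_tvar)
lemma subst_vars_zero[simp]: "subst_vars w 0 = 0"
  by (simp add: subst_vars_ev)



definition sat :: "nat \<Rightarrow> nat \<Rightarrow> nat \<Rightarrow> ((nat \<Rightarrow> nat) \<Rightarrow> cpoly) \<Rightarrow> bool" where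
  "sat n a b f \<longleftrightarrow> (\<forall>v. v permutes {1..n} \<longrightarrow>
      (tvar (v a) - tvar (v b)) dvd (f v - f (v \<circ> transpose a b)))"

definition satD :: "nat \<Rightarrow> (nat \<Rightarrow> nat) set \<Rightarrow> ((nat \<Rightarrow> nat) \<Rightarrow> cpoly) \<Rightarrow> bool" where
  "satD n D f \<longleftrightarrow> (\<forall>a b. transpose a b \<in> D \<longrightarrow> a \<in> {1..n} \<longrightarrow> b \<in> {1..n} \<longrightarrow> a \<noteq> b \<longrightarrow> sat n a b f)"

lemma perm_comp_tr:
  assumes "a \<in> {1..n}" "b \<in> {1..n}"
  shows "(v \<circ> transpose a b) permutes {1..n} \<longleftrightarrow> v permutes {1..n}"
proof
  assume "v permutes {1..n}"
  then show "(v \<circ> transpose a b) permutes {1..n}"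
    by (rule permutes_compose[OF permutes_swap_id[OF assms]])
next
  assume "(v \<circ> transpose a b) permutes {1..n}"
  then have "(v \<circ> transpose a b \<circ> transpose a b) permutes {1..n}"
    by (rule permutes_compose[OF permutes_swap_id[OF assms]])
  then show "v permutes {1..n}" by (simp add: comp_assoc)
qed

lemma Hs_zero: "f \<in> Hs n \<Longrightarrow> \<not> v permutes {1..n} \<Longrightarrow> f v = 0"
  by (simp add: Hs_def)
lemma Hs_Pn: "f \<in> Hs n \<Longrightarrow> v permutes {1..n} \<Longrightarrow> f v \<in> Pn n"
  by (simp add: Hs_def)
lemma HsI: "(\<And>v. v permutes {1..n} \<Longrightarrow> f v \<in> Pn n) \<Longrightarrow> (\<And>v. \<not> v permutes {1..n} \<Longrightarrow> f v = 0) \<Longrightarrow> f \<in> Hs n"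
  by (simp add: Hs_def)

lemma xfun_perm: "v permutes {1..n} \<Longrightarrow> xfun n j v = tvar (v j)"
  by (simp add: xfun_def)
lemma xfun_np: "\<not> v permutes {1..n} \<Longrightarrow> xfun n j v = 0"
  by (simp add: xfun_def)

lemma perm_in: "v permutes {1..n} \<Longrightarrow> j \<in> {1..n} \<Longrightarrow> v j \<in> {1..n}"
  using permutes_in_image[of v "{1..n}" j] by simp

lemma xfun_Hs: assumes "j \<in> {1..n}" shows "xfun n j \<in> Hs n"
proof (rule HsI)
  fix v assume v: "v permutes {1..n}"
  show "xfun n j v \<in> Pn n" unfolding xfun_perm[OF v] by (rule Pn_tvar[OF perm_in[OF v assms]])
qed (simp add: xfun_np)

lemma dvd_tr: "(tvar (v a) - tvar (v b)) dvd (tvar (v j) - tvar (v (transpose a b j)))"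
proof -
  consider "j = a" | "j = b" | "j \<noteq> a" "j \<noteq> b" by blast
  then show ?thesis
  proof cases
    case 2
    have "tvar (v j) - tvar (v (transpose a b j)) = - (tvar (v a) - tvar (v b))" using 2 by simp
    then show ?thesis by (simp only: dvd_minus_iff dvd_refl)
  qed auto
qed

lemma transpose_cases:
  assumes "transpose a b = transpose a' b'" "a \<noteq> b"
  shows "(a' = a \<and> b' = b) \<or> (a' = b \<and> b' = a)"
proof -
  have 1: "transpose a' b' a = b" using assms(1) transpose_apply_first[of a b] by simp
  have 2: "transpose a' b' b = a" using assms(1) transpose_apply_second[of a b] by simp
  show ?thesis using 1 2 assms(2) unfolding transpose_def by presburger
qed

lemma sat_sym: "sat n a b f = sat n b a f"
proof -
  have "(tvar (v a) - tvar (v b)) dvd x \<longleftrightarrow> (tvar (v b) - tvar (v a)) dvd x" for v x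
    using minus_dvd_iff[of "tvar (v a) - tvar (v b)" x] by simp
  then show ?thesis unfolding sat_def by (simp add: transpose_commute)
qed

lemma sat_of_eq:
  assumes "transpose a b = transpose a' b'" "a \<noteq> b"
  shows "sat n a b f = sat n a' b' f"
  using transpose_cases[OF assms] sat_sym by auto

lemma sat_quot:
  assumes f: "f \<in> Hs n" and ab: "a \<in> {1..n}" "b \<in> {1..n}" and s: "sat n a b f"
  shows "\<exists>g\<in>Hs n. \<forall>v. f v - f (v \<circ> transpose a b) = (xfun n a v - xfun n b v) * g v"
proof -
  let ?P = "\<lambda>v r. r \<in> Pn n \<and> f v - f (v \<circ> transpose a b) = (tvar (v a) - tvar (v b)) * r"
  have ex: "\<exists>r. ?P v r" if v: "v permutes {1..n}" for v
  proof -
    have d: "tvar (v a) - tvar (v b) \<in> Pn n"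
      by (intro Pn_diff Pn_tvar perm_in[OF v] ab)
    have v': "(v \<circ> transpose a b) permutes {1..n}" using perm_comp_tr[OF ab] v by simp
    have x: "f v - f (v \<circ> transpose a b) \<in> Pn n"
      by (intro Pn_diff Hs_Pn[OF f] v v')
    have dv: "(tvar (v a) - tvar (v b)) dvd (f v - f (v \<circ> transpose a b))"
      using s v unfolding sat_def by simp
    obtain r where "r \<in> Pn n" "f v - f (v \<circ> transpose a b) = (tvar (v a) - tvar (v b)) * r"
      using dvd_Pn[OF d x dv] by (elim bexE)
    then show ?thesis by (intro exI conjI)
  qed
  define g where "g v = (if v permutes {1..n} then (SOME r. ?P v r) else 0)" for v
  have gP: "?P v (g v)" if "v permutes {1..n}" for v
    using someI_ex[OF ex[OF that]] that by (simp add: g_def)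
  have "g \<in> Hs n"
  proof (rule HsI)
    fix v assume "v permutes {1..n}" then show "g v \<in> Pn n" using gP by simp
  next
    fix v assume "\<not> v permutes {1..n}" then show "g v = 0" by (simp add: g_def)
  qed
  moreover have "f v - f (v \<circ> transpose a b) = (xfun n a v - xfun n b v) * g v" for v
  proof (cases "v permutes {1..n}")
    case True then show ?thesis using gP[OF True] by (simp add: xfun_perm)
  next
    case False
    then have "\<not> (v \<circ> transpose a b) permutes {1..n}" using perm_comp_tr[OF ab, of v] by simp
    then show ?thesis using False f by (simp add: Hs_zero xfun_np)
  qed
  ultimately show ?thesis by blast
qed

lemma satisfies_iff:
  assumes f: "f \<in> Hs n" and ab: "a \<in> {1..n}" "b \<in> {1..n}" "a \<noteq> b"
  shows "satisfies n (transpose a b) f \<longleftrightarrow> sat n a b f"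
proof
  assume "satisfies n (transpose a b) f"
  then obtain a' b' g where a'b': "a' \<noteq> b'" "transpose a b = transpose a' b'" "g \<in> Hs n"
     and eq: "\<forall>v. f v - star f (transpose a b) v = (xfun n a' v - xfun n b' v) * g v"
    unfolding satisfies_def by metis
  have "sat n a' b' f"
    unfolding sat_def
  proof (intro allI impI)
    fix v assume "v permutes {1..n}"
    then show "(tvar (v a') - tvar (v b')) dvd (f v - f (v \<circ> transpose a' b'))"
      using eq[rule_format, of v] a'b'(2) by (simp add: star_def xfun_perm)
  qed
  then show "sat n a b f" using sat_of_eq[OF a'b'(2) ab(3)] by simp
next
  assume "sat n a b f"
  then obtain g where "g \<in> Hs n" "\<forall>v. f v - f (v \<circ> transpose a b) = (xfun n a v - xfun n b v) * g v"
    using sat_quot[OF f ab(1,2)] by blast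
  then show "satisfies n (transpose a b) f"
    unfolding satisfies_def star_def using ab(3) by auto
qed

lemma transps_elem: "\<sigma> \<in> transps n \<Longrightarrow> \<exists>a b. \<sigma> = transpose a b \<and> a \<in> {1..n} \<and> b \<in> {1..n} \<and> a \<noteq> b"
  by (auto simp: transps_def)

lemma HD_iff:
  assumes "D \<subseteq> transps n"
  shows "f \<in> HD n D \<longleftrightarrow> f \<in> Hs n \<and> satD n D f"
proof
  assume "f \<in> HD n D"
  then show "f \<in> Hs n \<and> satD n D f"
    unfolding HD_def satD_def using satisfies_iff by auto
next
  assume A: "f \<in> Hs n \<and> satD n D f"
  show "f \<in> HD n D"
    unfolding HD_def
  proof (intro CollectI conjI ballI)
    fix \<sigma> assume "\<sigma> \<in> D"
    then obtain a b where "\<sigma> = transpose a b" "a \<in> {1..n}" "b \<in> {1..n}" "a \<noteq> b"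
      using transps_elem assms by blast
    then show "satisfies n \<sigma> f" using A satisfies_iff \<open>\<sigma> \<in> D\<close> unfolding satD_def by auto
  qed (use A in auto)
qed

lemma sat_add: "sat n a b f \<Longrightarrow> sat n a b g \<Longrightarrow> sat n a b (\<lambda>v. f v + g v)"
  unfolding sat_def by (simp add: add_diff_add dvd_add)

lemma diff_diff_diff: "(x::'a::ab_group_add) - y - (z - w) = (x - z) - (y - w)"
  by (simp add: algebra_simps)

lemma sat_diff: "sat n a b f \<Longrightarrow> sat n a b g \<Longrightarrow> sat n a b (\<lambda>v. f v - g v)"
  unfolding sat_def
proof (intro allI impI)
  fix v assume f: "\<forall>v. v permutes {1..n} \<longrightarrow> tvar (v a) - tvar (v b) dvd f v - f (v \<circ> transpose a b)"
    and g: "\<forall>v. v permutes {1..n} \<longrightarrow> tvar (v a) - tvar (v b) dvd g v - g (v \<circ> transpose a b)"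
    and v: "v permutes {1..n}"
  have e: "f v - g v - (f (v \<circ> transpose a b) - g (v \<circ> transpose a b)) =
     (f v - f (v \<circ> transpose a b)) - (g v - g (v \<circ> transpose a b))"
    by (simp add: algebra_simps)
  show "tvar (v a) - tvar (v b) dvd f v - g v - (f (v \<circ> transpose a b) - g (v \<circ> transpose a b))"
    unfolding e using f g v by (simp add: dvd_diff)
qed

lemma sat_mult: "sat n a b f \<Longrightarrow> sat n a b g \<Longrightarrow> sat n a b (\<lambda>v. f v * g v)"
  unfolding sat_def
proof (intro allI impI)
  fix v assume f: "\<forall>v. v permutes {1..n} \<longrightarrow> tvar (v a) - tvar (v b) dvd f v - f (v \<circ> transpose a b)"
    and g: "\<forall>v. v permutes {1..n} \<longrightarrow> tvar (v a) - tvar (v b) dvd g v - g (v \<circ> transpose a b)"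
    and v: "v permutes {1..n}"
  have "f v * g v - f (v \<circ> transpose a b) * g (v \<circ> transpose a b) =
     f v * (g v - g (v \<circ> transpose a b)) + (f v - f (v \<circ> transpose a b)) * g (v \<circ> transpose a b)"
    by (simp add: algebra_simps)
  then show "tvar (v a) - tvar (v b) dvd f v * g v - f (v \<circ> transpose a b) * g (v \<circ> transpose a b)"
    using f g v by simp
qed

lemma sat_cmul: "sat n a b f \<Longrightarrow> sat n a b (\<lambda>v. p * f v)"
  unfolding sat_def by (simp add: right_diff_distrib[symmetric])

lemma sat_zero: "sat n a b (\<lambda>v. 0)"
  unfolding sat_def by simp

lemma sat_xfun:
  assumes "a \<in> {1..n}" "b \<in> {1..n}"
  shows "sat n a b (xfun n c)"
  unfolding sat_def
proof (intro allI impI)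
  fix v assume v: "v permutes {1..n}"
  then have "(v \<circ> transpose a b) permutes {1..n}" using perm_comp_tr[OF assms] by simp
  then show "tvar (v a) - tvar (v b) dvd xfun n c v - xfun n c (v \<circ> transpose a b)"
    using v dvd_tr[of v a b c] by (simp add: xfun_perm)
qed

lemma sat_y:
  assumes "a \<in> {1..n}" "b \<in> {1..n}"
  shows "sat n a b (\<lambda>v. xfun n c v - xfun n e v)"
  by (intro sat_diff sat_xfun assms)

lemma star_tr: "star f (transpose a b) = (\<lambda>v. f (v \<circ> transpose a b))"
  by (simp add: star_def)

lemma conj_tr: "transpose i j \<circ> transpose a b = transpose (transpose i j a) (transpose i j b) \<circ> transpose i j"
  unfolding fun_eq_iff comp_def transpose_def by presburger



definition sinv :: "nat \<Rightarrow> ((nat \<Rightarrow> nat) \<Rightarrow> cpoly) \<Rightarrow> bool" where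
  "sinv i u \<longleftrightarrow> (\<forall>v. u (v \<circ> sref i) = u v)"

lemma star_sref_iff: "star f (sref i) = f \<longleftrightarrow> sinv i f"
  by (simp add: star_def sref_def sinv_def fun_eq_iff)

lemma HDinv_iff:
  assumes "D \<subseteq> transps n"
  shows "f \<in> HDinv n i D \<longleftrightarrow> f \<in> Hs n \<and> satD n D f \<and> sinv i f"
  unfolding HDinv_def using HD_iff[OF assms] star_sref_iff by auto

lemma sinv_sat: "sinv i u \<Longrightarrow> sat n i (Suc i) u"
  unfolding sat_def sinv_def sref_def by simp

lemma sinv_sat': "sinv i u \<Longrightarrow> sat n (Suc i) i u"
  using sinv_sat sat_sym by blast

lemma sinv_conj_sat:
  assumes u: "sinv i u" and s: "sat n a b u" and ab: "a \<in> {1..n}" "b \<in> {1..n}"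
    and i: "i \<in> {1..n}" "Suc i \<in> {1..n}"
  shows "sat n (sref i a) (sref i b) u"
  unfolding sat_def
proof (intro allI impI)
  fix v assume v: "v permutes {1..n}"
  let ?s = "sref i" and ?t = "transpose a b"
  have vs: "(v \<circ> ?s) permutes {1..n}" using perm_comp_tr[OF i] v by (simp add: sref_def)
  have d: "(tvar ((v \<circ> ?s) a) - tvar ((v \<circ> ?s) b)) dvd (u (v \<circ> ?s) - u (v \<circ> ?s \<circ> ?t))"
    using s vs unfolding sat_def by blast
  have c: "?s \<circ> ?t = transpose (?s a) (?s b) \<circ> ?s"
    unfolding sref_def by (rule conj_tr)
  have "u (v \<circ> transpose (?s a) (?s b)) = u (v \<circ> transpose (?s a) (?s b) \<circ> ?s)"
    using u unfolding sinv_def by simp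
  also have "\<dots> = u (v \<circ> ?s \<circ> ?t)" using c by (simp add: comp_assoc)
  finally have e: "u (v \<circ> transpose (?s a) (?s b)) = u (v \<circ> ?s \<circ> ?t)" .
  have e2: "u (v \<circ> ?s) = u v" using u unfolding sinv_def by simp
  show "(tvar (v (?s a)) - tvar (v (?s b))) dvd (u v - u (v \<circ> transpose (?s a) (?s b)))"
    using d unfolding e e2 by simp
qed

lemma quot_s:
  assumes f: "f \<in> Hs n" and i: "i \<in> {1..n}" "Suc i \<in> {1..n}" and s: "sat n i (Suc i) f"
  obtains g where "g \<in> Hs n" "\<And>v. f v - f (v \<circ> sref i) = (xfun n i v - xfun n (Suc i) v) * g v"
    "sinv i g"
proof -
  obtain g where g: "g \<in> Hs n" and eq: "\<And>v. f v - f (v \<circ> sref i) = (xfun n i v - xfun n (Suc i) v) * g v"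
    using sat_quot[OF f i s] unfolding sref_def by blast
  have "g (v \<circ> sref i) = g v" for v
  proof (cases "v permutes {1..n}")
    case True
    have vs: "(v \<circ> sref i) permutes {1..n}" using perm_comp_tr[OF i] True by (simp add: sref_def)
    have ss: "v \<circ> sref i \<circ> sref i = v" by (simp add: sref_def comp_assoc)
    have e1: "f v - f (v \<circ> sref i) = (tvar (v i) - tvar (v (Suc i))) * g v"
      using eq[of v] True by (simp add: xfun_perm)
    have e2: "f (v \<circ> sref i) - f v = (tvar (v (Suc i)) - tvar (v i)) * g (v \<circ> sref i)"
      using eq[of "v \<circ> sref i"] vs ss by (simp add: xfun_perm sref_def)
    have "f v - f (v \<circ> sref i) = - (f (v \<circ> sref i) - f v)" by simp
    also have "\<dots> = - ((tvar (v (Suc i)) - tvar (v i)) * g (v \<circ> sref i))" using e2 by simp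
    also have "\<dots> = (tvar (v i) - tvar (v (Suc i))) * g (v \<circ> sref i)" by (simp add: algebra_simps)
    finally have "(tvar (v i) - tvar (v (Suc i))) * g v = (tvar (v i) - tvar (v (Suc i))) * g (v \<circ> sref i)"
      using e1 by simp
    moreover have "tvar (v i) - tvar (v (Suc i)) \<noteq> 0"
      using permutes_inj[OF True] by (simp add: inj_eq)
    ultimately show ?thesis by simp
  next
    case False
    then have "\<not> (v \<circ> sref i) permutes {1..n}" using perm_comp_tr[OF i] by (simp add: sref_def)
    then show ?thesis using False g by (simp add: Hs_zero)
  qed
  then have "sinv i g" by (simp add: sinv_def)
  then show ?thesis using that g eq by blast
qed

lemma ident_aux:
  fixes X1 :: "'a::comm_ring_1"
  shows "X1 = p * G1 \<Longrightarrow> X2 = p' * G2 \<Longrightarrow> p * (G1 - G2) = X1 - X2 - (p - p') * G2"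
  by (simp add: algebra_simps)

lemma quot_sat:
  assumes f: "f \<in> Hs n" and i: "i \<in> {1..n}" "Suc i \<in> {1..n}"
    and g: "\<And>v. f v - f (v \<circ> sref i) = (xfun n i v - xfun n (Suc i) v) * g v"
    and ab: "a \<in> {1..n}" "b \<in> {1..n}" "a \<noteq> b"
    and nots: "\<not> (a = i \<and> b = Suc i)" "\<not> (a = Suc i \<and> b = i)"
    and s1: "sat n a b f" and s2: "sat n (sref i a) (sref i b) f"
  shows "sat n a b g"
  unfolding sat_def
proof (intro allI impI)
  fix v assume v: "v permutes {1..n}"
  let ?s = "sref i" and ?t = "transpose a b"
  let ?q = "tvar (v a) - tvar (v b)"
  let ?p = "tvar (v i) - tvar (v (Suc i))"
  let ?p' = "tvar (v (?t i)) - tvar (v (?t (Suc i)))"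
  have vt: "(v \<circ> ?t) permutes {1..n}" using perm_comp_tr[OF ab(1,2)] v by simp
  have vs: "(v \<circ> ?s) permutes {1..n}" using perm_comp_tr[OF i] v by (simp add: sref_def)
  have E1: "f v - f (v \<circ> ?s) = ?p * g v" using g[of v] v by (simp add: xfun_perm)
  have E2: "f (v \<circ> ?t) - f (v \<circ> ?t \<circ> ?s) = ?p' * g (v \<circ> ?t)" using g[of "v \<circ> ?t"] vt by (simp add: xfun_perm)
  have D1: "?q dvd f v - f (v \<circ> ?t)" using s1 v unfolding sat_def by blast
  have ssa: "?s (?s a) = a" "?s (?s b) = b" by (simp_all add: sref_def)
  have D2': "(tvar ((v \<circ> ?s) (?s a)) - tvar ((v \<circ> ?s) (?s b))) dvd
      (f (v \<circ> ?s) - f (v \<circ> ?s \<circ> transpose (?s a) (?s b)))"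
    using s2 vs unfolding sat_def by blast
  have c: "?s \<circ> transpose (?s a) (?s b) = ?t \<circ> ?s"
    using conj_tr[of i "Suc i" "?s a" "?s b"] ssa unfolding sref_def by simp
  have D2: "?q dvd f (v \<circ> ?s) - f (v \<circ> ?t \<circ> ?s)"
    using D2' ssa c by (simp add: comp_assoc)
  have D3: "?q dvd ?p - ?p'"
  proof -
    have eq: "?p - ?p' = (tvar (v i) - tvar (v (?t i))) - (tvar (v (Suc i)) - tvar (v (?t (Suc i))))"
      by (simp add: algebra_simps)
    show ?thesis unfolding eq by (rule dvd_diff[OF dvd_tr dvd_tr])
  qed
  have I: "?p * (g v - g (v \<circ> ?t)) = ((f v - f (v \<circ> ?s)) - (f (v \<circ> ?t) - f (v \<circ> ?t \<circ> ?s))) - (?p - ?p') * g (v \<circ> ?t)"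
    by (rule ident_aux[OF E1 E2])
  have R: "(f v - f (v \<circ> ?s)) - (f (v \<circ> ?t) - f (v \<circ> ?t \<circ> ?s)) = (f v - f (v \<circ> ?t)) - (f (v \<circ> ?s) - f (v \<circ> ?t \<circ> ?s))"
    by (simp add: algebra_simps)
  have "?q dvd ?p * (g v - g (v \<circ> ?t))"
    unfolding I R by (rule dvd_diff[OF dvd_diff[OF D1 D2] dvd_mult2[OF D3]])
  moreover have "phi (v a) (v b) ?p \<noteq> 0"
  proof (rule phi_tvar_diff_nz)
    have inj: "inj v" using permutes_inj[OF v] .
    show "v i \<noteq> v (Suc i)" using inj by (simp add: inj_eq)
    show "\<not> (v i = v a \<and> v (Suc i) = v b)" using inj nots by (auto simp: inj_eq)
    show "\<not> (v i = v b \<and> v (Suc i) = v a)" using inj nots by (auto simp: inj_eq)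
  qed
  ultimately show "?q dvd g v - g (v \<circ> ?t)" by (rule dvd_cancel_phi)
qed

lemma y_tau_sat:
  assumes ab: "a \<in> {1..n}" "b \<in> {1..n}"
    and y: "\<And>v. v permutes {1..n} \<Longrightarrow> y (v \<circ> transpose a b) = - y v \<and> (tvar (v a) - tvar (v b)) dvd y v"
  shows "sat n a b (\<lambda>v. y v * h v)"
  unfolding sat_def
proof (intro allI impI)
  fix v assume v: "v permutes {1..n}"
  have "y v * h v - y (v \<circ> transpose a b) * h (v \<circ> transpose a b) = y v * (h v + h (v \<circ> transpose a b))"
    using y[OF v] by (simp add: algebra_simps)
  then show "(tvar (v a) - tvar (v b)) dvd y v * h v - y (v \<circ> transpose a b) * h (v \<circ> transpose a b)"
    using y[OF v] by (simp add: dvd_mult2)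
qed



lemma Hs_add: assumes f: "f \<in> Hs n" and g: "g \<in> Hs n" shows "(\<lambda>v. f v + g v) \<in> Hs n"
proof (rule HsI)
  fix v assume v: "v permutes {1..n}"
  show "f v + g v \<in> Pn n" by (rule Pn_add[OF Hs_Pn[OF f v] Hs_Pn[OF g v]])
next
  fix v assume v: "\<not> v permutes {1..n}"
  show "f v + g v = 0" using Hs_zero[OF f v] Hs_zero[OF g v] by simp
qed

lemma Hs_diff: assumes f: "f \<in> Hs n" and g: "g \<in> Hs n" shows "(\<lambda>v. f v - g v) \<in> Hs n"
proof (rule HsI)
  fix v assume v: "v permutes {1..n}"
  show "f v - g v \<in> Pn n" by (rule Pn_diff[OF Hs_Pn[OF f v] Hs_Pn[OF g v]])
next
  fix v assume v: "\<not> v permutes {1..n}"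
  show "f v - g v = 0" using Hs_zero[OF f v] Hs_zero[OF g v] by simp
qed

lemma Hs_mult: assumes f: "f \<in> Hs n" and g: "g \<in> Hs n" shows "(\<lambda>v. f v * g v) \<in> Hs n"
proof (rule HsI)
  fix v assume v: "v permutes {1..n}"
  show "f v * g v \<in> Pn n" by (rule Pn_mult[OF Hs_Pn[OF f v] Hs_Pn[OF g v]])
next
  fix v assume v: "\<not> v permutes {1..n}"
  show "f v * g v = 0" using Hs_zero[OF f v] Hs_zero[OF g v] by simp
qed

lemma Hs_cmul: assumes p: "p \<in> Pn n" and g: "g \<in> Hs n" shows "(\<lambda>v. p * g v) \<in> Hs n"
proof (rule HsI)
  fix v assume v: "v permutes {1..n}"
  show "p * g v \<in> Pn n" by (rule Pn_mult[OF p Hs_Pn[OF g v]])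
next
  fix v assume v: "\<not> v permutes {1..n}"
  show "p * g v = 0" using Hs_zero[OF g v] by simp
qed

lemma Hs_0: "(\<lambda>v. 0) \<in> Hs n"
  by (rule HsI) auto

lemma satD_add: "satD n D f \<Longrightarrow> satD n D g \<Longrightarrow> satD n D (\<lambda>v. f v + g v)"
  unfolding satD_def by (simp add: sat_add)
lemma satD_diff: "satD n D f \<Longrightarrow> satD n D g \<Longrightarrow> satD n D (\<lambda>v. f v - g v)"
  unfolding satD_def by (simp add: sat_diff)
lemma satD_mult: "satD n D f \<Longrightarrow> satD n D g \<Longrightarrow> satD n D (\<lambda>v. f v * g v)"
  unfolding satD_def by (simp add: sat_mult)
lemma satD_cmul: "satD n D f \<Longrightarrow> satD n D (\<lambda>v. p * f v)"
  unfolding satD_def by (simp add: sat_cmul)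
lemma satD_0: "satD n D (\<lambda>v. 0)"
  unfolding satD_def by (simp add: sat_zero)
lemma satD_y: "satD n D (\<lambda>v. xfun n c v - xfun n e v)"
  unfolding satD_def by (simp add: sat_y)
lemma satD_mono: "satD n D f \<Longrightarrow> D' \<subseteq> D \<Longrightarrow> satD n D' f"
  unfolding satD_def by blast

lemma sinv_add: "sinv i f \<Longrightarrow> sinv i g \<Longrightarrow> sinv i (\<lambda>v. f v + g v)"
  by (simp add: sinv_def)
lemma sinv_mult: "sinv i f \<Longrightarrow> sinv i g \<Longrightarrow> sinv i (\<lambda>v. f v * g v)"
  by (simp add: sinv_def)
lemma sinv_cmul: "sinv i f \<Longrightarrow> sinv i (\<lambda>v. p * f v)"
  by (simp add: sinv_def)
lemma sinv_0: "sinv i (\<lambda>v. 0)"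
  by (simp add: sinv_def)

lemma perm_inv_comp:
  assumes w: "w permutes {1..n}"
  shows "(inv w \<circ> v) permutes {1..n} \<longleftrightarrow> v permutes {1..n}"
proof
  assume "v permutes {1..n}"
  then show "(inv w \<circ> v) permutes {1..n}" by (rule permutes_compose[OF _ permutes_inv[OF w]])
next
  assume "(inv w \<circ> v) permutes {1..n}"
  then have "(w \<circ> (inv w \<circ> v)) permutes {1..n}" by (rule permutes_compose[OF _ w])
  then show "v permutes {1..n}" by (simp add: comp_assoc[symmetric] permutes_inv_o(1)[OF w])
qed

lemma dot_Hs:
  assumes w: "w permutes {1..n}" and f: "f \<in> Hs n"
  shows "dot w f \<in> Hs n"
proof (rule HsI)
  fix v assume v: "v permutes {1..n}"
  have "f (inv w \<circ> v) \<in> Pn n" using Hs_Pn[OF f] perm_inv_comp[OF w] v by simp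
  moreover have "\<And>j. j \<in> {1..n} \<Longrightarrow> w j \<in> {1..n}" using perm_in[OF w] by simp
  ultimately show "dot w f v \<in> Pn n" unfolding dot_def by (intro subst_vars_Pn) auto
next
  fix v assume v: "\<not> v permutes {1..n}"
  then show "dot w f v = 0" using Hs_zero[OF f] perm_inv_comp[OF w] by (simp add: dot_def)
qed

lemma dot_sat:
  assumes w: "w permutes {1..n}" and s: "sat n a b f"
  shows "sat n a b (dot w f)"
  unfolding sat_def
proof (intro allI impI)
  fix v assume v: "v permutes {1..n}"
  let ?u = "inv w \<circ> v" and ?t = "transpose a b"
  have u: "?u permutes {1..n}" using perm_inv_comp[OF w] v by simp
  obtain r where r: "f ?u - f (?u \<circ> ?t) = (tvar (?u a) - tvar (?u b)) * r"
    using s u unfolding sat_def by blast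
  have wu: "w (?u x) = v x" for x by (simp add: permutes_inverses(1)[OF w])
  have "dot w f v - dot w f (v \<circ> ?t) = subst_vars w (f ?u - f (?u \<circ> ?t))"
    by (simp add: dot_def subst_vars_diff comp_assoc)
  also have "\<dots> = (tvar (v a) - tvar (v b)) * subst_vars w r"
    unfolding r by (simp add: subst_vars_mult subst_vars_diff subst_vars_tvar wu[simplified])
  finally show "(tvar (v a) - tvar (v b)) dvd (dot w f v - dot w f (v \<circ> ?t))" by simp
qed

lemma dot_satD: "w permutes {1..n} \<Longrightarrow> satD n D f \<Longrightarrow> satD n D (dot w f)"
  unfolding satD_def by (simp add: dot_sat)

lemma dot_sinv: "sinv i f \<Longrightarrow> sinv i (dot w f)"
  unfolding sinv_def dot_def by (simp add: comp_assoc[symmetric])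

lemma dot_y:
  assumes w: "w permutes {1..n}"
  shows "dot w (\<lambda>v. (xfun n c v - xfun n e v) * h v) = (\<lambda>v. (xfun n c v - xfun n e v) * dot w h v)"
proof
  fix v
  have wu: "w (inv w x) = x" for x by (simp add: permutes_inverses(1)[OF w])
  have "subst_vars w (xfun n c (inv w \<circ> v) - xfun n e (inv w \<circ> v)) = xfun n c v - xfun n e v"
  proof (cases "v permutes {1..n}")
    case True
    then have "(inv w \<circ> v) permutes {1..n}" using perm_inv_comp[OF w] by simp
    then show ?thesis using True by (simp add: xfun_perm subst_vars_diff subst_vars_tvar wu)
  next
    case False
    then have "\<not> (inv w \<circ> v) permutes {1..n}" using perm_inv_comp[OF w] by simp
    then show ?thesis using False by (simp add: xfun_np)
  qed
  then show "dot w (\<lambda>v. (xfun n c v - xfun n e v) * h v) v = (xfun n c v - xfun n e v) * dot w h v"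
    by (simp add: dot_def subst_vars_mult)
qed

lemma HDinv_submodule:
  assumes D: "D \<subseteq> transps n"
  shows "dot_submodule n (HDinv n i D)"
  unfolding dot_submodule_def
proof (intro conjI ballI allI impI subsetI)
  fix f assume "f \<in> HDinv n i D" then show "f \<in> Hs n" using HDinv_iff[OF D] by blast
next
  show "(\<lambda>v. 0) \<in> HDinv n i D" unfolding HDinv_iff[OF D] using Hs_0 satD_0 sinv_0 by blast
next
  fix f g assume "f \<in> HDinv n i D" "g \<in> HDinv n i D"
  then have f: "f \<in> Hs n" "satD n D f" "sinv i f" and g: "g \<in> Hs n" "satD n D g" "sinv i g"
    using HDinv_iff[OF D] by blast+
  show "(\<lambda>v. f v + g v) \<in> HDinv n i D" unfolding HDinv_iff[OF D]
    using Hs_add[OF f(1) g(1)] satD_add[OF f(2) g(2)] sinv_add[OF f(3) g(3)] by blast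
next
  fix p f assume p: "p \<in> Pn n" and "f \<in> HDinv n i D"
  then have f: "f \<in> Hs n" "satD n D f" "sinv i f" using HDinv_iff[OF D] by blast+
  show "(\<lambda>v. p * f v) \<in> HDinv n i D" unfolding HDinv_iff[OF D]
    using Hs_cmul[OF p f(1)] satD_cmul[OF f(2)] sinv_cmul[OF f(3)] by blast
next
  fix w f assume w: "w permutes {1..n}" and "f \<in> HDinv n i D"
  then have f: "f \<in> Hs n" "satD n D f" "sinv i f" using HDinv_iff[OF D] by blast+
  show "dot w f \<in> HDinv n i D" unfolding HDinv_iff[OF D]
    using dot_Hs[OF w f(1)] dot_satD[OF w f(2)] dot_sinv[OF f(3)] by blast
qed

lemma msetI: "g \<in> S \<Longrightarrow> F = (\<lambda>v. y v * g v) \<Longrightarrow> F \<in> {(\<lambda>v. y v * g v) | g. g \<in> S}"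
  by blast

lemma mult_set_submodule:
  assumes D: "D \<subseteq> transps n" and ce: "c \<in> {1..n}" "e \<in> {1..n}"
  shows "dot_submodule n (mult_set (\<lambda>v. xfun n c v - xfun n e v) (HDinv n i D))"
proof -
  let ?y = "\<lambda>v. xfun n c v - xfun n e v"
  have y: "?y \<in> Hs n" using xfun_Hs[OF ce(1)] xfun_Hs[OF ce(2)] by (rule Hs_diff)
  have S: "dot_submodule n (HDinv n i D)" by (rule HDinv_submodule[OF D])
  have M: "mult_set ?y (HDinv n i D) = {(\<lambda>v. ?y v * g v) | g. g \<in> HDinv n i D}"
    by (simp add: mult_set_def)
  show ?thesis
    unfolding dot_submodule_def M
  proof (intro conjI ballI allI impI subsetI)
    fix f assume "f \<in> {(\<lambda>v. ?y v * g v) | g. g \<in> HDinv n i D}"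
    then obtain g where "f = (\<lambda>v. ?y v * g v)" "g \<in> HDinv n i D" by blast
    then show "f \<in> Hs n" using y S unfolding dot_submodule_def by (auto intro: Hs_mult)
  next
    have "(\<lambda>v. 0) \<in> HDinv n i D" using S unfolding dot_submodule_def by blast
    then show "(\<lambda>v. 0) \<in> {(\<lambda>v. ?y v * g v) | g. g \<in> HDinv n i D}" by (rule msetI) simp
  next
    fix f g assume "f \<in> {(\<lambda>v. ?y v * g v) | g. g \<in> HDinv n i D}" "g \<in> {(\<lambda>v. ?y v * g v) | g. g \<in> HDinv n i D}"
    then obtain f' g' where fg: "f = (\<lambda>v. ?y v * f' v)" "f' \<in> HDinv n i D" "g = (\<lambda>v. ?y v * g' v)" "g' \<in> HDinv n i D"
      by blast
    have "(\<lambda>v. f' v + g' v) \<in> HDinv n i D" using S fg unfolding dot_submodule_def by blast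
    moreover have "(\<lambda>v. f v + g v) = (\<lambda>v. ?y v * (f' v + g' v))" using fg by (simp add: algebra_simps)
    ultimately show "(\<lambda>v. f v + g v) \<in> {(\<lambda>v. ?y v * g v) | g. g \<in> HDinv n i D}" by (rule msetI)
  next
    fix p f assume p: "p \<in> Pn n" and "f \<in> {(\<lambda>v. ?y v * g v) | g. g \<in> HDinv n i D}"
    then obtain f' where fg: "f = (\<lambda>v. ?y v * f' v)" "f' \<in> HDinv n i D" by blast
    have "(\<lambda>v. p * f' v) \<in> HDinv n i D" using S fg p unfolding dot_submodule_def by blast
    moreover have "(\<lambda>v. p * f v) = (\<lambda>v. ?y v * (p * f' v))" using fg by (simp add: algebra_simps)
    ultimately show "(\<lambda>v. p * f v) \<in> {(\<lambda>v. ?y v * g v) | g. g \<in> HDinv n i D}" by (rule msetI)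
  next
    fix w f assume w: "w permutes {1..n}" and "f \<in> {(\<lambda>v. ?y v * g v) | g. g \<in> HDinv n i D}"
    then obtain f' where fg: "f = (\<lambda>v. ?y v * f' v)" "f' \<in> HDinv n i D" by blast
    have "dot w f' \<in> HDinv n i D" using S fg w unfolding dot_submodule_def by blast
    moreover have "dot w f = (\<lambda>v. ?y v * dot w f' v)" using fg dot_y[OF w] by simp
    ultimately show "dot w f \<in> {(\<lambda>v. ?y v * g v) | g. g \<in> HDinv n i D}" by (rule msetI)
  qed
qed



lemma sref_in: "i \<in> {1..n} \<Longrightarrow> Suc i \<in> {1..n} \<Longrightarrow> a \<in> {1..n} \<Longrightarrow> sref i a \<in> {1..n}"
  unfolding sref_def transpose_def by auto

lemma sref_neq: "a \<noteq> b \<Longrightarrow> sref i a \<noteq> sref i b"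
  unfolding sref_def by (simp add: inj_eq[OF inj_transpose])

lemma conj_s: "sref i \<circ> transpose a b \<circ> sref i = transpose (sref i a) (sref i b)"
proof -
  have "sref i \<circ> transpose a b \<circ> sref i = transpose (sref i a) (sref i b) \<circ> sref i \<circ> sref i"
    using conj_tr[of i "Suc i" a b] unfolding sref_def by simp
  also have "\<dots> = transpose (sref i a) (sref i b)"
    by (simp add: sref_def comp_assoc)
  finally show ?thesis .
qed

lemma main:
  fixes n i :: nat and C :: "(nat \<Rightarrow> nat) set" and \<tau> :: "nat \<Rightarrow> nat"
  assumes i: "i \<in> {1..n}" "Suc i \<in> {1..n}"
    and C: "C \<subseteq> transps n" and sC: "sref i \<in> C" and tC: "\<tau> \<in> C"
    and tn: "sref i \<circ> \<tau> \<circ> sref i \<notin> C"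
    and uniq: "\<forall>\<tau>' \<in> C. sref i \<circ> \<tau>' \<circ> sref i \<notin> C \<longrightarrow> \<tau>' = \<tau>"
    and tau: "\<tau> = transpose a0 b0" "a0 \<in> {1..n}" "b0 \<in> {1..n}" "a0 \<noteq> b0"
    and ce: "c \<in> {1..n}" "e \<in> {1..n}"
    and y2: "\<And>v. v permutes {1..n} \<Longrightarrow>
       (xfun n c v - xfun n e v) - (xfun n c (v \<circ> sref i) - xfun n e (v \<circ> sref i)) = tvar (v i) - tvar (v (Suc i))"
    and y3: "\<And>v. v permutes {1..n} \<Longrightarrow>
       (\<lambda>v. xfun n c v - xfun n e v) (v \<circ> transpose a0 b0) = - (xfun n c v - xfun n e v) \<and>
       (tvar (v a0) - tvar (v b0)) dvd (xfun n c v - xfun n e v)"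
  shows "is_direct_sum n (HD n C) (HDinv n i (insert (sref i \<circ> \<tau> \<circ> sref i) C))
           (mult_set (\<lambda>v. xfun n c v - xfun n e v) (HDinv n i (C - {\<tau>})))"
proof -
  define y where "y = (\<lambda>v. xfun n c v - xfun n e v)"
  define s where "s = sref i"
  define Cp where "Cp = insert (s \<circ> \<tau> \<circ> s) C"
  define Cm where "Cm = C - {\<tau>}"
  have sts: "s \<circ> \<tau> \<circ> s = transpose (s a0) (s b0)" unfolding s_def tau(1) by (rule conj_s)
  have sa0: "s a0 \<in> {1..n}" "s b0 \<in> {1..n}" "s a0 \<noteq> s b0"
    unfolding s_def using sref_in[OF i] tau(2,3) sref_neq[OF tau(4)] by auto
  have Cp: "Cp \<subseteq> transps n" unfolding Cp_def sts using C sa0 by (auto simp: transps_def)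
  have Cm: "Cm \<subseteq> transps n" unfolding Cm_def using C by blast
  have yHs: "y \<in> Hs n" unfolding y_def using xfun_Hs[OF ce(1)] xfun_Hs[OF ce(2)] by (rule Hs_diff)
  have ysat: "sat n a b y" if "a \<in> {1..n}" "b \<in> {1..n}" for a b
    unfolding y_def using that by (rule sat_y)
  have y2': "y v - y (v \<circ> s) = tvar (v i) - tvar (v (Suc i))" if "v permutes {1..n}" for v
    using y2[OF that] unfolding y_def s_def .
  have vs_perm: "(v \<circ> s) permutes {1..n} \<longleftrightarrow> v permutes {1..n}" for v
    unfolding s_def sref_def by (rule perm_comp_tr[OF i])
  have p_nz: "tvar (v i) - tvar (v (Suc i)) \<noteq> 0" if "v permutes {1..n}" for v
    using permutes_inj[OF that] by (simp add: inj_eq)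
  have K1: "satD n C (\<lambda>v. y v * h v)" if h: "satD n Cm h" for h
    unfolding satD_def
  proof (intro allI impI)
    fix a b assume ab: "transpose a b \<in> C" "a \<in> {1..n}" "b \<in> {1..n}" "a \<noteq> b"
    show "sat n a b (\<lambda>v. y v * h v)"
    proof (cases "transpose a b = \<tau>")
      case True
      have "sat n a0 b0 (\<lambda>v. y v * h v)"
        by (rule y_tau_sat[OF tau(2,3)]) (use y3 in \<open>simp add: y_def\<close>)
      then show ?thesis using sat_of_eq[of a b a0 b0 n] True tau(1) ab(4) by simp
    next
      case False
      then have "transpose a b \<in> Cm" using ab(1) by (simp add: Cm_def)
      then have "sat n a b h" using h ab unfolding satD_def by blast
      then show ?thesis using sat_mult[OF ysat[OF ab(2,3)]] by blast
    qed
  qed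
  have K3: "(\<lambda>v. a v + y v * b v) \<in> HD n C" if a: "a \<in> HDinv n i Cp" and b: "b \<in> HDinv n i Cm" for a b
  proof -
    have a': "a \<in> Hs n" "satD n Cp a" using a HDinv_iff[OF Cp] by blast+
    have b': "b \<in> Hs n" "satD n Cm b" using b HDinv_iff[OF Cm] by blast+
    have "satD n C a" using satD_mono[OF a'(2)] unfolding Cp_def by blast
    then have "satD n C (\<lambda>v. a v + y v * b v)" using K1[OF b'(2)] by (rule satD_add)
    moreover have "(\<lambda>v. a v + y v * b v) \<in> Hs n" using Hs_add[OF a'(1) Hs_mult[OF yHs b'(1)]] .
    ultimately show ?thesis using HD_iff[OF C] by blast
  qed
  have K2: "\<exists>g. g \<in> HDinv n i Cm \<and> (\<lambda>v. f v - y v * g v) \<in> HDinv n i Cp" if f: "f \<in> HD n C" for f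
  proof -
    have f': "f \<in> Hs n" "satD n C f" using f HD_iff[OF C] by blast+
    have fsat: "sat n a b f" if "transpose a b \<in> C" "a \<in> {1..n}" "b \<in> {1..n}" "a \<noteq> b" for a b
      using f'(2) that unfolding satD_def by blast
    have fs: "sat n i (Suc i) f"
      using fsat[of i "Suc i"] sC i by (simp add: sref_def)
    obtain g where g: "g \<in> Hs n" "\<And>v. f v - f (v \<circ> sref i) = (xfun n i v - xfun n (Suc i) v) * g v" "sinv i g"
      using quot_s[OF f'(1) i fs] by blast
    have gsat: "satD n Cm g"
      unfolding satD_def
    proof (intro allI impI)
      fix a b assume ab: "transpose a b \<in> Cm" "a \<in> {1..n}" "b \<in> {1..n}" "a \<noteq> b"
      show "sat n a b g"
      proof (cases "(a = i \<and> b = Suc i) \<or> (a = Suc i \<and> b = i)")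
        case True
        then show ?thesis using sinv_sat[OF g(3)] sinv_sat'[OF g(3)] by blast
      next
        case False
        have abC: "transpose a b \<in> C" "transpose a b \<noteq> \<tau>" using ab(1) by (auto simp: Cm_def)
        then have "sref i \<circ> transpose a b \<circ> sref i \<in> C" using uniq by blast
        then have C2: "transpose (sref i a) (sref i b) \<in> C" by (simp add: conj_s)
        have s2: "sat n (sref i a) (sref i b) f"
          by (rule fsat[OF C2 sref_in[OF i ab(2)] sref_in[OF i ab(3)] sref_neq[OF ab(4)]])
        show ?thesis
          by (rule quot_sat[OF f'(1) i g(2) ab(2,3,4) _ _ fsat[OF abC(1) ab(2,3,4)] s2]) (use False in auto)
      qed
    qed
    have gin: "g \<in> HDinv n i Cm" using g(1) gsat g(3) HDinv_iff[OF Cm] by blast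
    define a where "a = (\<lambda>v. f v - y v * g v)"
    have aHs: "a \<in> Hs n" unfolding a_def using Hs_diff[OF f'(1) Hs_mult[OF yHs g(1)]] .
    have asinv: "sinv i a"
      unfolding sinv_def
    proof
      fix v
      show "a (v \<circ> sref i) = a v"
      proof (cases "v permutes {1..n}")
        case True
        have e1: "f v - f (v \<circ> s) = (tvar (v i) - tvar (v (Suc i))) * g v"
          using g(2)[of v] True by (simp add: xfun_perm s_def)
        have e2: "g (v \<circ> s) = g v" using g(3) by (simp add: sinv_def s_def)
        have "a v - a (v \<circ> s) = (f v - f (v \<circ> s)) - (y v - y (v \<circ> s)) * g v"
          unfolding a_def e2 by (simp add: algebra_simps)
        also have "\<dots> = 0" unfolding e1 y2'[OF True] by simp
        finally show ?thesis by (simp add: s_def)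
      next
        case False
        then have "\<not> (v \<circ> s) permutes {1..n}" using vs_perm by simp
        then show ?thesis using False aHs Hs_zero unfolding s_def by metis
      qed
    qed
    have aC: "satD n C a"
      unfolding a_def by (rule satD_diff[OF f'(2) K1[OF gsat]])
    have aCp: "satD n Cp a"
      unfolding satD_def
    proof (intro allI impI)
      fix a' b' assume ab: "transpose a' b' \<in> Cp" "a' \<in> {1..n}" "b' \<in> {1..n}" "a' \<noteq> b'"
      show "sat n a' b' a"
      proof (cases "transpose a' b' \<in> C")
        case True then show ?thesis using aC ab unfolding satD_def by blast
      next
        case False
        then have eq: "transpose a' b' = transpose (s a0) (s b0)" using ab(1) sts by (simp add: Cp_def)
        have "sat n a0 b0 a" using aC tC tau unfolding satD_def by blast
        then have "sat n (s a0) (s b0) a"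
          unfolding s_def by (rule sinv_conj_sat[OF asinv _ tau(2,3) i])
        then show ?thesis using sat_of_eq[OF eq ab(4)] by simp
      qed
    qed
    have "a \<in> HDinv n i Cp" using aHs aCp asinv HDinv_iff[OF Cp] by blast
    then show ?thesis using gin unfolding a_def by blast
  qed
  have K4: "h = (\<lambda>v. 0)" if h: "h \<in> HDinv n i Cp" "h \<in> mult_set y (HDinv n i Cm)" for h
  proof -
    obtain b where b: "h = (\<lambda>v. y v * b v)" "b \<in> HDinv n i Cm" using h(2) unfolding mult_set_def by blast
    have b': "b \<in> Hs n" "sinv i b" using b(2) HDinv_iff[OF Cm] by blast+
    have hs: "sinv i h" using h(1) HDinv_iff[OF Cp] by blast
    have "b v = 0" for v
    proof (cases "v permutes {1..n}")
      case True
      have "y (v \<circ> s) * b (v \<circ> s) = y v * b v" using hs b(1) by (simp add: sinv_def s_def)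
      moreover have "b (v \<circ> s) = b v" using b'(2) by (simp add: sinv_def s_def)
      ultimately have "y (v \<circ> s) * b v = y v * b v" by simp
      then have "(y v - y (v \<circ> s)) * b v = 0" by (simp only: left_diff_distrib) simp
      then have "(tvar (v i) - tvar (v (Suc i))) * b v = 0" using y2'[OF True] by simp
      then show ?thesis using p_nz[OF True] by simp
    next
      case False then show ?thesis using Hs_zero[OF b'(1)] by simp
    qed
    then show ?thesis using b(1) by simp
  qed
  have Sp: "dot_submodule n (HDinv n i Cp)" by (rule HDinv_submodule[OF Cp])
  have Sm: "dot_submodule n (mult_set y (HDinv n i Cm))"
    unfolding y_def by (rule mult_set_submodule[OF Cm ce])
  have zp: "(\<lambda>v. 0) \<in> HDinv n i Cp" using Sp unfolding dot_submodule_def by blast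
  have zm: "(\<lambda>v. 0) \<in> mult_set y (HDinv n i Cm)" using Sm unfolding dot_submodule_def by blast
  have Meq: "HD n C = {(\<lambda>v. a v + b v) | a b. a \<in> HDinv n i Cp \<and> b \<in> mult_set y (HDinv n i Cm)}"
  proof (intro subset_antisym subsetI)
    fix f assume f: "f \<in> HD n C"
    obtain g where g: "g \<in> HDinv n i Cm" "(\<lambda>v. f v - y v * g v) \<in> HDinv n i Cp" using K2[OF f] by blast
    have gm: "(\<lambda>v. y v * g v) \<in> mult_set y (HDinv n i Cm)" unfolding mult_set_def using g(1) by (rule msetI) simp
    define A where "A = (\<lambda>v. f v - y v * g v)"
    define B where "B = (\<lambda>v. y v * g v)"
    have "f = (\<lambda>v. A v + B v)" by (simp add: A_def B_def)
    moreover have "A \<in> HDinv n i Cp" "B \<in> mult_set y (HDinv n i Cm)" using g(2) gm by (simp_all add: A_def B_def)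
    ultimately show "f \<in> {(\<lambda>v. a v + b v) | a b. a \<in> HDinv n i Cp \<and> b \<in> mult_set y (HDinv n i Cm)}"
      by blast
  next
    fix f assume "f \<in> {(\<lambda>v. a v + b v) | a b. a \<in> HDinv n i Cp \<and> b \<in> mult_set y (HDinv n i Cm)}"
    then obtain a b where ab: "f = (\<lambda>v. a v + b v)" "a \<in> HDinv n i Cp" "b \<in> mult_set y (HDinv n i Cm)" by blast
    obtain b' where b': "b = (\<lambda>v. y v * b' v)" "b' \<in> HDinv n i Cm" using ab(3) unfolding mult_set_def by blast
    show "f \<in> HD n C" unfolding ab(1) b'(1) by (rule K3[OF ab(2) b'(2)])
  qed
  have Int: "HDinv n i Cp \<inter> mult_set y (HDinv n i Cm) = {(\<lambda>v. 0)}"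
    using K4 zp zm by blast
  show ?thesis
    unfolding is_direct_sum_def using Sp Sm Meq Int unfolding Cp_def Cm_def y_def s_def by blast
qed



theorem theorem2:
  fixes n i :: nat and C :: "(nat \<Rightarrow> nat) set" and \<tau> :: "nat \<Rightarrow> nat"
  assumes "n \<ge> 1" and "1 \<le> i" and "i \<le> n - 1"
    and "C \<subseteq> transps n"
    and "sref i \<in> C"
    and "\<tau> \<in> C" and "sref i \<circ> \<tau> \<circ> sref i \<notin> C"
    and "\<forall>\<tau>' \<in> C. sref i \<circ> \<tau>' \<circ> sref i \<notin> C \<longrightarrow> \<tau>' = \<tau>"
  shows "(\<forall>k. \<tau> = transpose i k \<longrightarrow>
            is_direct_sum n (HD n C)
              (HDinv n i (insert (sref i \<circ> \<tau> \<circ> sref i) C))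
              (mult_set (\<lambda>v. xfun n i v - xfun n k v) (HDinv n i (C - {\<tau>}))))
       \<and> ((\<nexists>k. \<tau> = transpose i k) \<longrightarrow>
            (\<exists>k. \<tau> = transpose (Suc i) k \<and>
              is_direct_sum n (HD n C)
                (HDinv n i (insert (sref i \<circ> \<tau> \<circ> sref i) C))
                (mult_set (\<lambda>v. xfun n k v - xfun n (Suc i) v) (HDinv n i (C - {\<tau>})))))"
proof -
  have i: "i \<in> {1..n}" "Suc i \<in> {1..n}" using assms(1-3) by auto
  obtain a0 b0 where ab: "\<tau> = transpose a0 b0" "a0 \<in> {1..n}" "b0 \<in> {1..n}" "a0 \<noteq> b0"
    using transps_elem assms(4,6) by blast
  have tr_in: "transpose a0 b0 x \<in> {1..n}" if "x \<in> {1..n}" for x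
    using that ab(2,3) unfolding transpose_def by auto
  have not_s: "\<tau> \<noteq> sref i"
  proof
    assume "\<tau> = sref i"
    then have "sref i \<circ> \<tau> \<circ> sref i = sref i" by (simp add: sref_def comp_assoc)
    then show False using assms(5,7) by simp
  qed
  have vs_xfun: "xfun n j (v \<circ> sref i) = tvar (v (sref i j))" if "v permutes {1..n}" for v j
  proof -
    have "(v \<circ> sref i) permutes {1..n}" using perm_comp_tr[OF i] that by (simp add: sref_def)
    then show ?thesis by (simp add: xfun_perm)
  qed
  have vt_xfun: "xfun n j (v \<circ> transpose a b) = tvar (v (transpose a b j))"
    if "v permutes {1..n}" "a \<in> {1..n}" "b \<in> {1..n}" for v j a b
  proof -
    have "(v \<circ> transpose a b) permutes {1..n}" using perm_comp_tr[OF that(2,3)] that(1) by simp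
    then show ?thesis by (simp add: xfun_perm)
  qed
  have P1: "is_direct_sum n (HD n C)
              (HDinv n i (insert (sref i \<circ> \<tau> \<circ> sref i) C))
              (mult_set (\<lambda>v. xfun n i v - xfun n k v) (HDinv n i (C - {\<tau>})))"
    if k: "\<tau> = transpose i k" for k
  proof -
    have ki: "k \<noteq> i" using k ab(1,4) by (metis transpose_eq_id_iff transpose_same)
    have kin: "k \<in> {1..n}" using tr_in[OF i(1)] k ab(1) by (metis transpose_apply_first)
    have ks: "k \<noteq> Suc i" using not_s k by (auto simp: sref_def)
    show ?thesis
    proof (rule main[OF i assms(4,5,6,7,8) k i(1) kin not_sym[OF ki] i(1) kin])
      fix v assume v: "v permutes {1..n}"
      show "xfun n i v - xfun n k v - (xfun n i (v \<circ> sref i) - xfun n k (v \<circ> sref i)) =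
            tvar (v i) - tvar (v (Suc i))"
        unfolding vs_xfun[OF v] xfun_perm[OF v] using ki ks by (simp add: sref_def)
    next
      fix v assume v: "v permutes {1..n}"
      show "(\<lambda>v. xfun n i v - xfun n k v) (v \<circ> transpose i k) = - (xfun n i v - xfun n k v) \<and>
            (tvar (v i) - tvar (v k)) dvd (xfun n i v - xfun n k v)"
        by (simp add: vt_xfun[OF v i(1) kin] xfun_perm[OF v])
    qed
  qed
  have P2: "\<exists>k. \<tau> = transpose (Suc i) k \<and>
              is_direct_sum n (HD n C)
                (HDinv n i (insert (sref i \<circ> \<tau> \<circ> sref i) C))
                (mult_set (\<lambda>v. xfun n k v - xfun n (Suc i) v) (HDinv n i (C - {\<tau>})))"
    if nk: "\<nexists>k. \<tau> = transpose i k"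
  proof -
    have a0i: "a0 \<noteq> i" using nk ab(1) by blast
    have b0i: "b0 \<noteq> i" using nk ab(1) transpose_commute by metis
    obtain k where k: "\<tau> = transpose (Suc i) k" "k \<in> {1..n}" "k \<noteq> Suc i" "k \<noteq> i"
    proof (cases "a0 = Suc i \<or> b0 = Suc i")
      case True
      then show ?thesis
      proof
        assume "a0 = Suc i" then show ?thesis using that[of b0] ab b0i by auto
      next
        assume "b0 = Suc i" then show ?thesis using that[of a0] ab a0i transpose_commute by metis
      qed
    next
      case False
      have "sref i \<circ> \<tau> \<circ> sref i = transpose (sref i a0) (sref i b0)" unfolding ab(1) by (rule conj_s)
      also have "\<dots> = \<tau>" using False a0i b0i ab(1) by (simp add: sref_def)
      finally show ?thesis using assms(6,7) by simp
    qed
    have "is_direct_sum n (HD n C)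
                (HDinv n i (insert (sref i \<circ> \<tau> \<circ> sref i) C))
                (mult_set (\<lambda>v. xfun n k v - xfun n (Suc i) v) (HDinv n i (C - {\<tau>})))"
    proof (rule main[OF i assms(4,5,6,7,8) k(1) i(2) k(2) not_sym[OF k(3)] k(2) i(2)])
      fix v assume v: "v permutes {1..n}"
      show "xfun n k v - xfun n (Suc i) v - (xfun n k (v \<circ> sref i) - xfun n (Suc i) (v \<circ> sref i)) =
            tvar (v i) - tvar (v (Suc i))"
        unfolding vs_xfun[OF v] xfun_perm[OF v] using k(3,4) by (simp add: sref_def)
    next
      fix v assume v: "v permutes {1..n}"
      have "tvar (v k) - tvar (v (Suc i)) = - (tvar (v (Suc i)) - tvar (v k))" by simp
      then have dd: "(tvar (v (Suc i)) - tvar (v k)) dvd (tvar (v k) - tvar (v (Suc i)))"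
        by (simp only: dvd_minus_iff dvd_refl)
      then show "(\<lambda>v. xfun n k v - xfun n (Suc i) v) (v \<circ> transpose (Suc i) k) = - (xfun n k v - xfun n (Suc i) v) \<and>
            (tvar (v (Suc i)) - tvar (v k)) dvd (xfun n k v - xfun n (Suc i) v)"
        using dd by (simp add: vt_xfun[OF v i(2) k(2)] xfun_perm[OF v])
    qed
    then show ?thesis using k(1) by blast
  qed
  show ?thesis using P1 P2 by blast
qed

end
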